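(* Consider the hybrid system $\dot x\in F(x)$, $x\in C$; $x^+\in G(x)$, $x\in D$, satisfying the hybrid basic conditions (A1)–(A3) below, and suppose that $G(D)\cap D=\emptyset$, $G(D)\subseteq C$, $G$ is single-valued and proper, and $-F(x)\cap T_C(x)=\emptyset$ for all $x\in C\cap G(D)$. Let $\bar K\in\mathbb{R}$. If $D$ is bounded, then for every $\epsilon_4>0$ there exists $\epsilon_3>0$ such that for any solution $\phi$ and any $(t,j)\in\operatorname{dom}\phi$ with $j\in\{1,2,\dots\}$ and $\phi(t,j)\in(C\cap G(D))+\mathcal B_{\epsilon_3}$, there exists $t'\in[t-\epsilon_4,t]$ with $(t',j)\in\operatorname{dom}\phi$ and $\phi(t',j)\in C\cap G(D)$. If $D$ is unbounded, then for every $\epsilon_4>0$ there exists $\epsilon_3>0$ such that the same conclusion holds for any solution $\phi$ and any $(t,j)\in\operatorname{dom}\phi$ with $j\ge1$, $\phi(t,j)\in(C\cap G(D))+\mathcal B_{\epsilon_3}$ and additionally $\phi(t,j)\in\mathcal B_{\bar K}$.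
   Context: $\mathcal B_s=\{x\in\mathbb{R}^n:\|x\|\le s\}$ (Euclidean norm), $S_1+S_2=\{y_1+y_2:y_i\in S_i\}$. (A1) $C,D\subseteq\mathbb{R}^n$ closed; (A2) $F:\mathbb{R}^n\rightrightarrows\mathbb{R}^n$ outer semicontinuous and locally bounded relative to $C$, $C\subseteq\{x:F(x)\neq\emptyset\}$, $F(x)$ convex for $x\in C$; (A3) $G:\mathbb{R}^n\rightrightarrows\mathbb{R}^n$ outer semicontinuous and locally bounded relative to $D$, $D\subseteq\{x:G(x)\ne\emptyset\}$. Solutions are functions on hybrid time domains (subsets of $\mathbb{R}_{\ge0}\times\mathbb{N}$ that are unions of intervals $[t_j,t_{j+1}]\times\{j\}$ with $0=t_0\le t_1\le\cdots$), locally absolutely continuous in $t$ for fixed $j$, with $\phi(0,0)\in C\cup D$, $\phi(t,j)\in C$ and $\dot\phi\in F(\phi)$ a.e. during flow, and $\phi(t,j)\in D$, $\phi(t,j+1)\in G(\phi(t,j))$ at jumps. $T_C(x)$ is the Bouligand tangent cone to $C$ at $x$. $G$ proper means preimages of compact sets are compact. *)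

theory Defs
  imports "HOL-Analysis.Analysis"
begin

definition Bset :: "real \<Rightarrow> 'a::real_normed_vector set" where
  "Bset s = {x. norm x \<le> s}"

definition msum :: "'a::real_normed_vector set \<Rightarrow> 'a set \<Rightarrow> 'a set" where
  "msum S1 S2 = {y1 + y2 | y1 y2. y1 \<in> S1 \<and> y2 \<in> S2}"

definition osc_rel :: "('a::real_normed_vector \<Rightarrow> 'b::real_normed_vector set) \<Rightarrow> 'a set \<Rightarrow> bool" where
  "osc_rel F S \<longleftrightarrow> (\<forall>x\<in>S. \<forall>xs ys y. (\<forall>i. xs i \<in> S \<and> ys i \<in> F (xs i)) \<and>
      xs \<longlonglongrightarrow> x \<and> ys \<longlonglongrightarrow> y \<longrightarrow> y \<in> F x)"

definition locbdd_rel :: "('a::real_normed_vector \<Rightarrow> 'b::real_normed_vector set) \<Rightarrow> 'a set \<Rightarrow> bool" where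
  "locbdd_rel F S \<longleftrightarrow> (\<forall>x\<in>S. \<exists>U. open U \<and> x \<in> U \<and> bounded (\<Union>z\<in>U \<inter> S. F z))"

definition tangent_cone :: "'a::real_normed_vector set \<Rightarrow> 'a \<Rightarrow> 'a set" where
  "tangent_cone C x = {v. \<exists>(t::nat \<Rightarrow> real) w. (\<forall>i. t i > 0 \<and> x + t i *\<^sub>R w i \<in> C) \<and>
      t \<longlonglongrightarrow> 0 \<and> w \<longlonglongrightarrow> v}"

definition img :: "('a \<Rightarrow> 'b set) \<Rightarrow> 'a set \<Rightarrow> 'b set" where
  "img G D = (\<Union>x\<in>D. G x)"

definition hybrid_basic_conditions ::
  "'a::euclidean_space set \<Rightarrow> ('a \<Rightarrow> 'a set) \<Rightarrow> 'a set \<Rightarrow> ('a \<Rightarrow> 'a set) \<Rightarrow> bool" where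
  "hybrid_basic_conditions C F D G \<longleftrightarrow>
     closed C \<and> closed D \<and>
     osc_rel F C \<and> locbdd_rel F C \<and> (\<forall>x\<in>C. F x \<noteq> {} \<and> convex (F x)) \<and>
     osc_rel G D \<and> locbdd_rel G D \<and> (\<forall>x\<in>D. G x \<noteq> {})"

definition hybrid_time_domain :: "(real \<times> nat) set \<Rightarrow> bool" where
  "hybrid_time_domain E \<longleftrightarrow> E \<subseteq> {0..} \<times> UNIV \<and>
     (\<forall>T J. (T, J) \<in> E \<longrightarrow>
        (\<exists>tt::nat \<Rightarrow> real. tt 0 = 0 \<and> (\<forall>j\<le>J. tt j \<le> tt (Suc j)) \<and>
           E \<inter> ({0..T} \<times> {..J}) = (\<Union>j\<le>J. {tt j..tt (Suc j)} \<times> {j})))"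

definition abs_cont_on_interval :: "(real \<Rightarrow> 'a::real_normed_vector) \<Rightarrow> real \<Rightarrow> real \<Rightarrow> bool" where
  "abs_cont_on_interval f a b \<longleftrightarrow> (\<forall>\<epsilon>>0. \<exists>\<delta>>0. \<forall>(n::nat) (l::nat \<Rightarrow> real) (r::nat \<Rightarrow> real).
      (\<forall>k<n. a \<le> l k \<and> l k \<le> r k \<and> r k \<le> b) \<and>
      (\<forall>k<n. \<forall>m<n. k \<noteq> m \<longrightarrow> r k \<le> l m \<or> r m \<le> l k) \<and>
      (\<Sum>k<n. r k - l k) < \<delta> \<longrightarrow> (\<Sum>k<n. norm (f (r k) - f (l k))) < \<epsilon>)"

definition loc_abs_cont_on :: "(real \<Rightarrow> 'a::real_normed_vector) \<Rightarrow> real set \<Rightarrow> bool" where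
  "loc_abs_cont_on f I \<longleftrightarrow> (\<forall>a b. a \<le> b \<and> {a..b} \<subseteq> I \<longrightarrow> abs_cont_on_interval f a b)"

definition is_solution ::
  "'a::euclidean_space set \<Rightarrow> ('a \<Rightarrow> 'a set) \<Rightarrow> 'a set \<Rightarrow> ('a \<Rightarrow> 'a set) \<Rightarrow>
   (real \<times> nat) set \<Rightarrow> (real \<Rightarrow> nat \<Rightarrow> 'a) \<Rightarrow> bool" where
  "is_solution C F D G E \<phi> \<longleftrightarrow>
     hybrid_time_domain E \<and> (0, 0) \<in> E \<and> \<phi> 0 0 \<in> C \<union> D \<and>
     (\<forall>j. loc_abs_cont_on (\<lambda>t. \<phi> t j) {t. (t, j) \<in> E}) \<and>
     (\<forall>j. interior {t. (t, j) \<in> E} \<noteq> {} \<longrightarrow>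
        (\<forall>t\<in>interior {t. (t, j) \<in> E}. \<phi> t j \<in> C) \<and>
        (\<exists>N. negligible N \<and> (\<forall>t\<in>interior {t. (t, j) \<in> E} - N.
            \<exists>v. ((\<lambda>s. \<phi> s j) has_vector_derivative v) (at t) \<and> v \<in> F (\<phi> t j)))) \<and>
     (\<forall>t j. (t, j) \<in> E \<and> (t, Suc j) \<in> E \<longrightarrow> \<phi> t j \<in> D \<and> \<phi> t (Suc j) \<in> G (\<phi> t j))"

definition proper_setmap_on :: "('a::euclidean_space \<Rightarrow> 'b::euclidean_space set) \<Rightarrow> 'a set \<Rightarrow> bool" where
  "proper_setmap_on G D \<longleftrightarrow> (\<forall>K. compact K \<longrightarrow> compact {x\<in>D. G x \<inter> K \<noteq> {}})"

definition single_valued_on :: "('a \<Rightarrow> 'b set) \<Rightarrow> 'a set \<Rightarrow> bool" where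
  "single_valued_on G D \<longleftrightarrow> (\<forall>x\<in>D. \<exists>y. G x = {y})"

end

theory Submission
  imports Defs
begin
lemma negligible_open_cover:
  assumes "negligible S" "e > 0"
  obtains T where "open T" "S \<subseteq> T" "T \<in> lmeasurable" "measure lebesgue T < e"
proof -
  have Sl: "S \<in> sets lebesgue"
    using assms(1) negligible_imp_measurable fmeasurableD by blast
  obtain T where T: "open T" "S \<subseteq> T" "(T - S) \<in> lmeasurable" "emeasure lebesgue (T - S) < ennreal e"
    using sets_lebesgue_outer_open[OF Sl assms(2)] by blast
  have Sm: "S \<in> lmeasurable" "measure lebesgue S = 0"
    using assms(1) negligible_iff_measure by blast+
  have eqT: "T = (T - S) \<union> S" using T(2) by blast
  have Tl: "T \<in> lmeasurable"
    by (metis eqT T(3) Sm(1) fmeasurable.Un)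
  have "measure lebesgue T \<le> measure lebesgue (T - S) + measure lebesgue S"
    by (metis eqT T(3) Sm(1) measure_Un_le fmeasurableD)
  moreover have "measure lebesgue (T - S) < e"
    using T(3,4) by (metis emeasure_eq_measure2 ennreal_less_iff measure_nonneg)
  ultimately show ?thesis using that T(1,2) Tl Sm(2) by force
qed

lemma tdiv_elem:
  assumes "p tagged_division_of {a..b::real}" "(x,K) \<in> p"
  shows "\<exists>u v. K = {u..v} \<and> u \<le> x \<and> x \<le> v \<and> a \<le> u \<and> v \<le> b"
proof -
  obtain u v where K: "K = cbox u v" using tagged_division_ofD(4)[OF assms] by blast
  have "x \<in> K" "K \<subseteq> {a..b}" using tagged_division_ofD(2,3)[OF assms] by auto
  then show ?thesis using K by (auto intro!: exI[of _ u] exI[of _ v])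
qed

lemma tdiv_disj:
  assumes "p tagged_division_of {a..b::real}" "(x1,K1) \<in> p" "(x2,K2) \<in> p" "(x1,K1) \<noteq> (x2,K2)"
    and "Inf K1 < Sup K1" "Inf K2 < Sup K2"
  shows "Sup K1 \<le> Inf K2 \<or> Sup K2 \<le> Inf K1"
proof -
  obtain u1 v1 where 1: "K1 = {u1..v1}" "u1 \<le> v1" using tdiv_elem[OF assms(1,2)] by auto
  obtain u2 v2 where 2: "K2 = {u2..v2}" "u2 \<le> v2" using tdiv_elem[OF assms(1,3)] by auto
  have i: "interior K1 \<inter> interior K2 = {}" using tagged_division_ofD(5)[OF assms(1-4)] .
  have u: "u1 < v1" "u2 < v2" using assms(5,6) 1 2 by auto
  show ?thesis
  proof (rule ccontr)
    assume "\<not> ?thesis"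
    then have "v1 > u2" "v2 > u1" using 1 2 by auto
    define m where "m = (max u1 u2 + min v1 v2) / 2"
    have "m \<in> interior K1 \<inter> interior K2" using u \<open>v1 > u2\<close> \<open>v2 > u1\<close> 1 2
      by (auto simp: m_def)
    then show False using i by blast
  qed
qed

lemma deriv_nonpos_local:
  fixes g :: "real \<Rightarrow> real"
  assumes "(g has_real_derivative d) (at s)" "d \<le> 0" "\<epsilon> > 0"
  shows "\<exists>r>0. \<forall>y. \<bar>y - s\<bar> < r \<longrightarrow> (s \<le> y \<longrightarrow> g y - g s \<le> \<epsilon> * (y - s)) \<and> (y \<le> s \<longrightarrow> g s - g y \<le> \<epsilon> * (s - y))"
proof -
  have "((\<lambda>y. (g y - g s) / (y - s)) \<longlongrightarrow> d) (at s)"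
    using assms(1) has_field_derivative_iff by blast
  then have "\<forall>\<^sub>F y in at s. dist ((g y - g s) / (y - s)) d < \<epsilon>"
    using assms(3) tendsto_iff by fastforce
  then obtain r where r: "r > 0" "\<And>y. y \<noteq> s \<Longrightarrow> dist y s < r \<Longrightarrow> dist ((g y - g s) / (y - s)) d < \<epsilon>"
    unfolding eventually_at by blast
  show ?thesis
  proof (intro exI[of _ r] conjI allI impI)
    show "r > 0" by fact
    fix y assume y: "\<bar>y - s\<bar> < r"
    {
      assume "s \<le> y"
      show "g y - g s \<le> \<epsilon> * (y - s)"
      proof (cases "y = s")
        case False
        then have ys: "y - s > 0" using \<open>s \<le> y\<close> by simp
        have "dist ((g y - g s) / (y - s)) d < \<epsilon>" using r(2)[OF False] y by (simp add: dist_real_def)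
        then have "(g y - g s) / (y - s) < \<epsilon>" using assms(2) by (simp add: dist_real_def)
        then show ?thesis using ys by (simp add: divide_less_eq mult.commute)
      qed simp
    }
    {
      assume "y \<le> s"
      show "g s - g y \<le> \<epsilon> * (s - y)"
      proof (cases "y = s")
        case False
        then have ys: "s - y > 0" using \<open>y \<le> s\<close> by simp
        have "dist ((g y - g s) / (y - s)) d < \<epsilon>" using r(2)[OF False] y by (simp add: dist_real_def)
        moreover have "(g y - g s) / (y - s) = (g s - g y) / (s - y)"
          by (metis minus_diff_eq minus_divide_divide)
        ultimately have "(g s - g y) / (s - y) < \<epsilon>" using assms(2) by (simp add: dist_real_def)
        then show ?thesis using ys by (simp add: divide_less_eq mult.commute)
      qed simp
    }
  qed
qed

lemma ac_mono:
  fixes g :: "real \<Rightarrow> real"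
  assumes ab: "a \<le> b" and ac: "abs_cont_on_interval g a b" and N: "negligible N"
    and der: "\<forall>s\<in>{a<..<b} - N. \<exists>d. (g has_real_derivative d) (at s) \<and> d \<le> 0"
  shows "g b \<le> g a"
proof -
  have key: "g b - g a \<le> \<epsilon> * (b - a) + \<epsilon>" if \<epsilon>: "\<epsilon> > 0" for \<epsilon>
  proof -
    obtain \<eta> where \<eta>: "\<eta> > 0" and ac\<eta>0: "\<forall>(n::nat) (l::nat \<Rightarrow> real) (r::nat \<Rightarrow> real).
      (\<forall>k<n. a \<le> l k \<and> l k \<le> r k \<and> r k \<le> b) \<and>
      (\<forall>k<n. \<forall>m<n. k \<noteq> m \<longrightarrow> r k \<le> l m \<or> r m \<le> l k) \<and>
      (\<Sum>k<n. r k - l k) < \<eta> \<longrightarrow> (\<Sum>k<n. norm (g (r k) - g (l k))) < \<epsilon>"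
      using ac \<epsilon> unfolding abs_cont_on_interval_def by blast
    have ac\<eta>: "(\<Sum>k<n. norm (g (r k) - g (l k))) < \<epsilon>" if "\<forall>k<(n::nat). a \<le> l k \<and> l k \<le> r k \<and> r k \<le> b"
        "\<forall>k<n. \<forall>m<n. k \<noteq> m \<longrightarrow> r k \<le> l m \<or> r m \<le> l k" "(\<Sum>k<n. r k - l k) < \<eta>" for n l r
      using ac\<eta>0 that by blast
    define N' where "N' = N \<union> {a, b}"
    have nN': "negligible N'" unfolding N'_def using N by (simp add: negligible_Un)
    obtain Op where Op: "open Op" "N' \<subseteq> Op" "Op \<in> lmeasurable" "measure lebesgue Op < \<eta>"
      using negligible_open_cover[OF nN' \<eta>] by blast
    have "\<forall>s\<in>N'. \<exists>r>0. ball s r \<subseteq> Op" using Op(1,2) open_contains_ball by blast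
    then obtain rb where rb: "\<And>s. s \<in> N' \<Longrightarrow> rb s > 0 \<and> ball s (rb s) \<subseteq> Op" by metis
    have "\<forall>s\<in>{a<..<b} - N'. \<exists>r>0. \<forall>y. \<bar>y - s\<bar> < r \<longrightarrow> (s \<le> y \<longrightarrow> g y - g s \<le> \<epsilon> * (y - s)) \<and> (y \<le> s \<longrightarrow> g s - g y \<le> \<epsilon> * (s - y))"
    proof
      fix s assume "s \<in> {a<..<b} - N'"
      then obtain d where "(g has_real_derivative d) (at s)" "d \<le> 0" using der unfolding N'_def by blast
      then show "\<exists>r>0. \<forall>y. \<bar>y - s\<bar> < r \<longrightarrow> (s \<le> y \<longrightarrow> g y - g s \<le> \<epsilon> * (y - s)) \<and> (y \<le> s \<longrightarrow> g s - g y \<le> \<epsilon> * (s - y))"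
        using deriv_nonpos_local \<epsilon> by blast
    qed
    then obtain rg where rg: "\<And>s. s \<in> {a<..<b} - N' \<Longrightarrow> rg s > 0 \<and> (\<forall>y. \<bar>y - s\<bar> < rg s \<longrightarrow> (s \<le> y \<longrightarrow> g y - g s \<le> \<epsilon> * (y - s)) \<and> (y \<le> s \<longrightarrow> g s - g y \<le> \<epsilon> * (s - y)))"
      by metis
    define \<gamma> where "\<gamma> s = (if s \<in> N' then ball s (rb s) else if s \<in> {a<..<b} then ball s (rg s) else ball s 1)" for s
    have gg: "gauge \<gamma>" unfolding gauge_def \<gamma>_def using rb rg by auto
    obtain p where p: "p tagged_division_of {a..b}" "\<gamma> fine p"
      using fine_division_exists[OF gg, of a b] by (metis box_real(2))
    have pf: "finite p" using p(1) by blast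
    have sumeq: "(\<Sum>(x,K)\<in>p. g (Sup K) - g (Inf K)) = g b - g a"
      using additive_tagged_division_1[OF ab p(1)] .
    have lens: "(\<Sum>(x,K)\<in>p. Sup K - Inf K) = b - a"
      using additive_tagged_division_1[OF ab p(1), of "\<lambda>x. x"] by simp
    define P1 where "P1 = {xK\<in>p. fst xK \<in> N'}"
    define P2 where "P2 = {xK\<in>p. fst xK \<notin> N'}"
    have P12: "p = P1 \<union> P2" "P1 \<inter> P2 = {}" "finite P1" "finite P2"
      using pf unfolding P1_def P2_def by auto
    have split: "sum f p = sum f P1 + sum f P2" for f :: "real \<times> real set \<Rightarrow> real"
      using P12 by (metis sum.union_disjoint)
    have elem: "\<exists>u v. K = {u..v} \<and> u \<le> x \<and> x \<le> v \<and> a \<le> u \<and> v \<le> b \<and> Inf K = u \<and> Sup K = v" if xKp: "(x,K) \<in> p" for x K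
    proof -
      obtain u v where uv: "K = {u..v}" "u \<le> x" "x \<le> v" "a \<le> u" "v \<le> b"
        using tdiv_elem[OF p(1) xKp] by blast
      then have "u \<le> v" by linarith
      then have "Inf K = u" "Sup K = v" using uv(1) by simp_all
      then show ?thesis using uv by blast
    qed
    have nonneg: "Sup K - Inf K \<ge> 0" if "(x,K) \<in> p" for x K
      using elem[OF that] by auto
    have good: "(\<Sum>(x,K)\<in>P2. g (Sup K) - g (Inf K)) \<le> \<epsilon> * (b - a)"
    proof -
      have "(\<Sum>(x,K)\<in>P2. g (Sup K) - g (Inf K)) \<le> (\<Sum>(x,K)\<in>P2. \<epsilon> * (Sup K - Inf K))"
      proof (rule sum_mono)
        fix xK assume xK: "xK \<in> P2"
        obtain x K where xKe: "xK = (x,K)" by fastforce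
        have xp: "(x,K) \<in> p" "x \<notin> N'" using xK xKe unfolding P2_def by auto
        obtain u v where uv: "K = {u..v}" "u \<le> x" "x \<le> v" "a \<le> u" "v \<le> b" "Inf K = u" "Sup K = v"
          using elem[OF xp(1)] by blast
        have xab: "x \<in> {a<..<b} - N'" using xp(2) uv unfolding N'_def by auto
        have Kg: "K \<subseteq> ball x (rg x)" using fineD[OF p(2) xp(1)] xab unfolding \<gamma>_def by auto
        have "u \<in> K" "v \<in> K" using uv(1-3) by auto
        then have d: "\<bar>u - x\<bar> < rg x" "\<bar>v - x\<bar> < rg x" using Kg by (auto simp: dist_real_def)
        have "g v - g x \<le> \<epsilon> * (v - x)" "g x - g u \<le> \<epsilon> * (x - u)"
          using rg[OF xab] d uv by auto
        then show "(case xK of (x, K) \<Rightarrow> g (Sup K) - g (Inf K)) \<le> (case xK of (x, K) \<Rightarrow> \<epsilon> * (Sup K - Inf K))"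
          using xKe uv by (simp add: algebra_simps)
      qed
      also have "\<dots> = \<epsilon> * (\<Sum>(x,K)\<in>P2. Sup K - Inf K)"
        by (simp add: sum_distrib_left case_prod_beta)
      also have "\<dots> \<le> \<epsilon> * (\<Sum>(x,K)\<in>p. Sup K - Inf K)"
      proof -
        have "(\<Sum>(x,K)\<in>P2. Sup K - Inf K) \<le> (\<Sum>(x,K)\<in>p. Sup K - Inf K)"
          using split[of "\<lambda>(x,K). Sup K - Inf K"] sum_nonneg[of P1 "\<lambda>(x,K). Sup K - Inf K"] nonneg P12(1)
          by fastforce
        then show ?thesis using \<epsilon> by simp
      qed
      finally show ?thesis using lens by simp
    qed
    define Q where "Q = {xK\<in>P1. Inf (snd xK) < Sup (snd xK)}"
    have Qf: "finite Q" using P12 unfolding Q_def by auto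
    have Qp: "Q \<subseteq> p" unfolding Q_def P1_def by auto
    have bad1: "(\<Sum>(x,K)\<in>P1. g (Sup K) - g (Inf K)) \<le> (\<Sum>(x,K)\<in>Q. \<bar>g (Sup K) - g (Inf K)\<bar>)"
    proof -
      have "(\<Sum>(x,K)\<in>P1. g (Sup K) - g (Inf K)) \<le> (\<Sum>(x,K)\<in>P1. \<bar>g (Sup K) - g (Inf K)\<bar>)"
        by (rule sum_mono) auto
      also have "\<dots> = (\<Sum>(x,K)\<in>Q. \<bar>g (Sup K) - g (Inf K)\<bar>)"
      proof (rule sum.mono_neutral_right)
        show "finite P1" by fact
        show "Q \<subseteq> P1" unfolding Q_def by auto
        show "\<forall>i\<in>P1 - Q. (case i of (x, K) \<Rightarrow> \<bar>g (Sup K) - g (Inf K)\<bar>) = 0"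
        proof
          fix i assume i: "i \<in> P1 - Q"
          obtain x K where ie: "i = (x,K)" by fastforce
          have "(x,K) \<in> p" "\<not> Inf K < Sup K" using i ie unfolding Q_def P1_def by auto
          then have "Sup K = Inf K" using elem[of x K] by force
          then show "(case i of (x, K) \<Rightarrow> \<bar>g (Sup K) - g (Inf K)\<bar>) = 0" using ie by simp
        qed
      qed
      finally show ?thesis .
    qed
    have lenQ: "(\<Sum>(x,K)\<in>Q. Sup K - Inf K) \<le> measure lebesgue Op"
    proof -
      have "(\<Sum>(x,K)\<in>Q. Sup K - Inf K) = (\<Sum>xK\<in>Q. measure lebesgue (snd xK))"
      proof (rule sum.cong)
        fix xK assume "xK \<in> Q"
        then obtain x K where xK: "xK = (x,K)" "(x,K) \<in> p" using Qp by (cases xK) auto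
        obtain u v where "K = {u..v}" "u \<le> x" "x \<le> v" "Inf K = u" "Sup K = v" using elem[OF xK(2)] by blast
        then show "(case xK of (x, K) \<Rightarrow> Sup K - Inf K) = measure lebesgue (snd xK)"
          using xK(1) by simp
      qed simp
      also have "\<dots> = measure lebesgue (\<Union>(snd ` Q))"
      proof (rule measure_negligible_finite_Union_image[symmetric])
        show "finite Q" by fact
        show "snd xK \<in> lmeasurable" if xQ: "xK \<in> Q" for xK
        proof -
          obtain x K where xK: "xK = (x,K)" "(x,K) \<in> p" using xQ Qp by (cases xK) auto
          obtain u v where "K = {u..v}" using elem[OF xK(2)] by blast
          then show ?thesis using xK(1) by simp
        qed
        show "pairwise (\<lambda>x y. negligible (snd x \<inter> snd y)) Q"
          unfolding pairwise_def
        proof (intro ballI impI)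
          fix xK yK assume h: "xK \<in> Q" "yK \<in> Q" "xK \<noteq> yK"
          obtain x1 K1 where 1: "xK = (x1,K1)" by fastforce
          obtain x2 K2 where 2: "yK = (x2,K2)" by fastforce
          have m: "(x1,K1) \<in> p" "(x2,K2) \<in> p" "Inf K1 < Sup K1" "Inf K2 < Sup K2"
            using h 1 2 Qp unfolding Q_def by auto
          have o: "Sup K1 \<le> Inf K2 \<or> Sup K2 \<le> Inf K1"
            using tdiv_disj[OF p(1) m(1,2) _ m(3,4)] h 1 2 by auto
          obtain u1 v1 where e1: "K1 = {u1..v1}" "Inf K1 = u1" "Sup K1 = v1" using elem[OF m(1)] by blast
          obtain u2 v2 where e2: "K2 = {u2..v2}" "Inf K2 = u2" "Sup K2 = v2" using elem[OF m(2)] by blast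
          have "K1 \<inter> K2 \<subseteq> {v1, v2}" using o e1 e2 by auto
          then show "negligible (snd xK \<inter> snd yK)" using 1 2
            by (auto intro: negligible_subset[of "{v1,v2}"])
        qed
      qed
      also have "\<dots> \<le> measure lebesgue Op"
      proof (rule measure_mono_fmeasurable)
        show "\<Union>(snd ` Q) \<subseteq> Op"
        proof
          fix z assume "z \<in> \<Union>(snd ` Q)"
          then obtain x K where xK: "(x,K) \<in> Q" "z \<in> K" by force
          have "x \<in> N'" "(x,K) \<in> p" using xK Qp unfolding Q_def P1_def by auto
          then have "K \<subseteq> ball x (rb x)" using fineD[OF p(2), of x K] unfolding \<gamma>_def by simp
          then show "z \<in> Op" using rb \<open>x \<in> N'\<close> xK(2) by blast
        qed
        show "\<Union>(snd ` Q) \<in> sets lebesgue"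
        proof (rule sets.finite_UN)
          show "finite Q" by fact
          fix xK assume xQ: "xK \<in> Q"
          obtain x K where xK: "xK = (x,K)" "(x,K) \<in> p" using xQ Qp by (cases xK) auto
          obtain u v where "K = {u..v}" using elem[OF xK(2)] by blast
          then show "snd xK \<in> sets lebesgue" using xK(1) by simp
        qed
        show "Op \<in> fmeasurable lebesgue" using Op(3) .
      qed
      finally show ?thesis .
    qed
    have bad2: "(\<Sum>(x,K)\<in>Q. \<bar>g (Sup K) - g (Inf K)\<bar>) < \<epsilon>"
    proof -
      obtain e where e: "bij_betw e {0..<card Q} Q" using ex_bij_betw_nat_finite[OF Qf] by blast
      define n where "n = card Q"
      define l where "l k = Inf (snd (e k))" for k
      define r where "r k = Sup (snd (e k))" for k
      have eQ: "e k \<in> Q" if "k < n" for k using e that unfolding n_def bij_betw_def by auto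
      have reidx: "(\<Sum>k<n. f (e k)) = sum f Q" for f :: "real \<times> real set \<Rightarrow> real"
        using sum.reindex_bij_betw[OF e, of f] by (simp add: n_def atLeast0LessThan)
      have c1: "\<forall>k<n. a \<le> l k \<and> l k \<le> r k \<and> r k \<le> b"
      proof (intro allI impI)
        fix k assume "k < n"
        then have "e k \<in> p" using eQ Qp by blast
        then obtain x K where xK: "e k = (x,K)" "(x,K) \<in> p" by (cases "e k") auto
        obtain u v where "K = {u..v}" "u \<le> x" "x \<le> v" "a \<le> u" "v \<le> b" "Inf K = u" "Sup K = v" using elem[OF xK(2)] by blast
        then show "a \<le> l k \<and> l k \<le> r k \<and> r k \<le> b" unfolding l_def r_def using xK(1) by simp
      qed
      have c2: "\<forall>k<n. \<forall>m<n. k \<noteq> m \<longrightarrow> r k \<le> l m \<or> r m \<le> l k"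
      proof (intro allI impI)
        fix k m assume km: "k < n" "m < n" "k \<noteq> m"
        have "e k \<noteq> e m" using e km unfolding bij_betw_def inj_on_def n_def by auto
        moreover obtain x1 K1 where 1: "e k = (x1,K1)" by fastforce
        moreover obtain x2 K2 where 2: "e m = (x2,K2)" by fastforce
        moreover have "(x1,K1) \<in> Q" "(x2,K2) \<in> Q" using eQ km 1 2 by metis+
        then have "(x1,K1) \<in> p" "(x2,K2) \<in> p" "Inf K1 < Sup K1" "Inf K2 < Sup K2"
          unfolding Q_def P1_def by auto
        ultimately have "Sup K1 \<le> Inf K2 \<or> Sup K2 \<le> Inf K1"
          using tdiv_disj[OF p(1), of x1 K1 x2 K2] by simp
        then show "r k \<le> l m \<or> r m \<le> l k"
          unfolding l_def r_def using 1 2 by simp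
      qed
      have c3: "(\<Sum>k<n. r k - l k) < \<eta>"
      proof -
        have "(\<Sum>k<n. r k - l k) = (\<Sum>(x,K)\<in>Q. Sup K - Inf K)"
          using reidx[of "\<lambda>(x,K). Sup K - Inf K"] unfolding l_def r_def by (simp add: case_prod_beta)
        then show ?thesis using lenQ Op(4) by linarith
      qed
      have "(\<Sum>k<n. norm (g (r k) - g (l k))) < \<epsilon>" using ac\<eta>[OF c1 c2 c3] .
      moreover have "(\<Sum>k<n. norm (g (r k) - g (l k))) = (\<Sum>(x,K)\<in>Q. \<bar>g (Sup K) - g (Inf K)\<bar>)"
        using reidx[of "\<lambda>(x,K). \<bar>g (Sup K) - g (Inf K)\<bar>"] unfolding l_def r_def by (simp add: case_prod_beta)
      ultimately show ?thesis by simp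
    qed
    have "g b - g a = (\<Sum>(x,K)\<in>P1. g (Sup K) - g (Inf K)) + (\<Sum>(x,K)\<in>P2. g (Sup K) - g (Inf K))"
      using sumeq split by metis
    then show ?thesis using good bad1 bad2 by linarith
  qed
  show ?thesis
  proof (rule ccontr)
    assume "\<not> ?thesis"
    then have gt: "g b - g a > 0" by simp
    define \<epsilon> where "\<epsilon> = (g b - g a) / (2 * (b - a + 1))"
    have ep: "\<epsilon> > 0" using gt ab unfolding \<epsilon>_def by simp
    have "g b - g a \<le> \<epsilon> * (b - a + 1)" using key[OF ep] by (simp add: algebra_simps)
    also have "\<dots> = (g b - g a) / 2" unfolding \<epsilon>_def using ab by (simp add: field_simps)
    finally show False using gt by simp
  qed
qed

lemma inner_vd:
  fixes \<psi> :: "real \<Rightarrow> 'a::euclidean_space"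
  assumes "(\<psi> has_vector_derivative v) (at s)"
  shows "((\<lambda>t. c * t - inner w (\<psi> t)) has_real_derivative (c - inner w v)) (at s)"
proof -
  have "((\<lambda>t. inner w (\<psi> t)) has_vector_derivative inner w v) (at s)"
    using bounded_linear.has_vector_derivative[OF bounded_linear_inner_right assms] .
  then have "((\<lambda>t. inner w (\<psi> t)) has_real_derivative inner w v) (at s)"
    using has_real_derivative_iff_has_vector_derivative by blast
  then show ?thesis by (auto intro!: derivative_eq_intros)
qed

lemma ac_sub:
  assumes "abs_cont_on_interval f a b" "a \<le> c" "d \<le> b"
  shows "abs_cont_on_interval f c d"
  unfolding abs_cont_on_interval_def
proof (intro allI impI)
  fix \<epsilon> :: real assume "\<epsilon> > 0"
  then obtain \<delta> where \<delta>: "\<delta> > 0" "\<forall>(n::nat) (l::nat \<Rightarrow> real) (r::nat \<Rightarrow> real).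
      (\<forall>k<n. a \<le> l k \<and> l k \<le> r k \<and> r k \<le> b) \<and>
      (\<forall>k<n. \<forall>m<n. k \<noteq> m \<longrightarrow> r k \<le> l m \<or> r m \<le> l k) \<and>
      (\<Sum>k<n. r k - l k) < \<delta> \<longrightarrow> (\<Sum>k<n. norm (f (r k) - f (l k))) < \<epsilon>"
    using assms(1) unfolding abs_cont_on_interval_def by blast
  show "\<exists>\<delta>>0. \<forall>(n::nat) (l::nat \<Rightarrow> real) (r::nat \<Rightarrow> real).
      (\<forall>k<n. c \<le> l k \<and> l k \<le> r k \<and> r k \<le> d) \<and>
      (\<forall>k<n. \<forall>m<n. k \<noteq> m \<longrightarrow> r k \<le> l m \<or> r m \<le> l k) \<and>
      (\<Sum>k<n. r k - l k) < \<delta> \<longrightarrow> (\<Sum>k<n. norm (f (r k) - f (l k))) < \<epsilon>"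
  proof (intro exI[of _ \<delta>] conjI allI impI)
    show "\<delta> > 0" by fact
    fix n :: nat and l r :: "nat \<Rightarrow> real"
    assume h: "(\<forall>k<n. c \<le> l k \<and> l k \<le> r k \<and> r k \<le> d) \<and>
      (\<forall>k<n. \<forall>m<n. k \<noteq> m \<longrightarrow> r k \<le> l m \<or> r m \<le> l k) \<and> (\<Sum>k<n. r k - l k) < \<delta>"
    have "\<forall>k<n. a \<le> l k \<and> l k \<le> r k \<and> r k \<le> b" using h assms(2,3) by force
    then show "(\<Sum>k<n. norm (f (r k) - f (l k))) < \<epsilon>" using h \<delta>(2) by blast
  qed
qed

lemma ac_cont:
  assumes "abs_cont_on_interval f a b"
  shows "continuous_on {a..b} f"
  unfolding continuous_on_iff
proof (intro ballI allI impI)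
  fix x e assume x: "x \<in> {a..b}" and e: "(e::real) > 0"
  obtain \<delta> where \<delta>: "\<delta> > 0" "\<forall>(n::nat) (l::nat \<Rightarrow> real) (r::nat \<Rightarrow> real).
      (\<forall>k<n. a \<le> l k \<and> l k \<le> r k \<and> r k \<le> b) \<and>
      (\<forall>k<n. \<forall>m<n. k \<noteq> m \<longrightarrow> r k \<le> l m \<or> r m \<le> l k) \<and>
      (\<Sum>k<n. r k - l k) < \<delta> \<longrightarrow> (\<Sum>k<n. norm (f (r k) - f (l k))) < e"
    using assms e unfolding abs_cont_on_interval_def by blast
  show "\<exists>d>0. \<forall>x'\<in>{a..b}. dist x' x < d \<longrightarrow> dist (f x') (f x) < e"
  proof (intro exI[of _ \<delta>] conjI ballI impI)
    show "\<delta> > 0" by fact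
    fix x' assume x': "x' \<in> {a..b}" "dist x' x < \<delta>"
    define l where "l = (\<lambda>k::nat. min x x')"
    define r where "r = (\<lambda>k::nat. max x x')"
    have "(\<Sum>k<(1::nat). norm (f (r k) - f (l k))) < e"
      using \<delta>(2)[rule_format, of 1 l r] x x' unfolding l_def r_def by (cases "x \<le> x'") (auto simp: dist_real_def)
    then show "dist (f x') (f x) < e"
      unfolding l_def r_def by (cases "x \<le> x'") (auto simp: dist_norm norm_minus_commute)
  qed
qed

lemma ac_lin:
  fixes \<psi> :: "real \<Rightarrow> 'a::euclidean_space"
  assumes "abs_cont_on_interval \<psi> a b"
  shows "abs_cont_on_interval (\<lambda>t. c * t - inner w (\<psi> t)) a b"
  unfolding abs_cont_on_interval_def
proof (intro allI impI)
  fix \<epsilon> :: real assume e: "\<epsilon> > 0"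
  define \<epsilon>1 where "\<epsilon>1 = \<epsilon> / (2 * (norm w + 1))"
  have e1: "\<epsilon>1 > 0" unfolding \<epsilon>1_def using e norm_ge_zero[of w] by (intro divide_pos_pos mult_pos_pos) (auto intro: add_nonneg_pos)
  obtain \<delta>1 where \<delta>1: "\<delta>1 > 0" "\<forall>(n::nat) (l::nat \<Rightarrow> real) (r::nat \<Rightarrow> real).
      (\<forall>k<n. a \<le> l k \<and> l k \<le> r k \<and> r k \<le> b) \<and>
      (\<forall>k<n. \<forall>m<n. k \<noteq> m \<longrightarrow> r k \<le> l m \<or> r m \<le> l k) \<and>
      (\<Sum>k<n. r k - l k) < \<delta>1 \<longrightarrow> (\<Sum>k<n. norm (\<psi> (r k) - \<psi> (l k))) < \<epsilon>1"
    using assms e1 unfolding abs_cont_on_interval_def by blast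
  define \<delta> where "\<delta> = min \<delta>1 (\<epsilon> / (2 * (\<bar>c\<bar> + 1)))"
  have "\<epsilon> / (2 * (\<bar>c\<bar> + 1)) > 0" using e by (intro divide_pos_pos) auto
  then have d: "\<delta> > 0" unfolding \<delta>_def using \<delta>1(1) by simp
  show "\<exists>\<delta>>0. \<forall>(n::nat) (l::nat \<Rightarrow> real) (r::nat \<Rightarrow> real).
      (\<forall>k<n. a \<le> l k \<and> l k \<le> r k \<and> r k \<le> b) \<and>
      (\<forall>k<n. \<forall>m<n. k \<noteq> m \<longrightarrow> r k \<le> l m \<or> r m \<le> l k) \<and>
      (\<Sum>k<n. r k - l k) < \<delta> \<longrightarrow> (\<Sum>k<n. norm ((c * r k - inner w (\<psi> (r k))) - (c * l k - inner w (\<psi> (l k))))) < \<epsilon>"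
  proof (intro exI[of _ \<delta>] conjI allI impI)
    show "\<delta> > 0" by fact
    fix n :: nat and l r :: "nat \<Rightarrow> real"
    assume h: "(\<forall>k<n. a \<le> l k \<and> l k \<le> r k \<and> r k \<le> b) \<and>
      (\<forall>k<n. \<forall>m<n. k \<noteq> m \<longrightarrow> r k \<le> l m \<or> r m \<le> l k) \<and> (\<Sum>k<n. r k - l k) < \<delta>"
    have s1: "(\<Sum>k<n. norm (\<psi> (r k) - \<psi> (l k))) < \<epsilon>1"
      using h \<delta>1(2) unfolding \<delta>_def by auto
    have s2: "(\<Sum>k<n. r k - l k) < \<epsilon> / (2 * (\<bar>c\<bar> + 1))"
      using h unfolding \<delta>_def by auto
    have "(\<Sum>k<n. norm ((c * r k - inner w (\<psi> (r k))) - (c * l k - inner w (\<psi> (l k)))))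
        \<le> (\<Sum>k<n. \<bar>c\<bar> * (r k - l k) + norm w * norm (\<psi> (r k) - \<psi> (l k)))"
    proof (rule sum_mono)
      fix k assume "k \<in> {..<n}"
      then have rl: "r k - l k \<ge> 0" using h by auto
      have "norm ((c * r k - inner w (\<psi> (r k))) - (c * l k - inner w (\<psi> (l k))))
          = \<bar>c * (r k - l k) - inner w (\<psi> (r k) - \<psi> (l k))\<bar>"
        by (simp add: inner_diff_right algebra_simps)
      also have "\<dots> \<le> \<bar>c * (r k - l k)\<bar> + \<bar>inner w (\<psi> (r k) - \<psi> (l k))\<bar>" by (rule abs_triangle_ineq4)
      also have "\<dots> \<le> \<bar>c\<bar> * (r k - l k) + norm w * norm (\<psi> (r k) - \<psi> (l k))"
        using Cauchy_Schwarz_ineq2[of w "\<psi> (r k) - \<psi> (l k)"] rl by (simp add: abs_mult)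
      finally show "norm ((c * r k - inner w (\<psi> (r k))) - (c * l k - inner w (\<psi> (l k))))
          \<le> \<bar>c\<bar> * (r k - l k) + norm w * norm (\<psi> (r k) - \<psi> (l k))" .
    qed
    also have "\<dots> = \<bar>c\<bar> * (\<Sum>k<n. r k - l k) + norm w * (\<Sum>k<n. norm (\<psi> (r k) - \<psi> (l k)))"
      by (simp add: sum.distrib sum_distrib_left)
    also have "\<dots> < \<epsilon>"
    proof -
      have "\<bar>c\<bar> * (\<Sum>k<n. r k - l k) \<le> \<bar>c\<bar> * (\<epsilon> / (2 * (\<bar>c\<bar> + 1)))"
        using s2 by (intro mult_left_mono) auto
      also have "\<dots> < \<epsilon> / 2" using e by (simp add: field_simps)
      finally have A: "\<bar>c\<bar> * (\<Sum>k<n. r k - l k) < \<epsilon> / 2" .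
      have "norm w * (\<Sum>k<n. norm (\<psi> (r k) - \<psi> (l k))) \<le> norm w * \<epsilon>1"
        using s1 by (intro mult_left_mono) auto
      also have "\<dots> = (\<epsilon> / 2) * (norm w / (norm w + 1))"
        unfolding \<epsilon>1_def by (simp add: field_simps)
      also have "\<dots> < (\<epsilon> / 2) * 1"
        using e by (intro mult_strict_left_mono) (auto simp: add_nonneg_pos)
      also have "\<dots> = \<epsilon> / 2" by simp
      finally show ?thesis using A by linarith
    qed
    finally show "(\<Sum>k<n. norm ((c * r k - inner w (\<psi> (r k))) - (c * l k - inner w (\<psi> (l k))))) < \<epsilon>" .
  qed
qed

lemma mvt_incl:
  fixes \<psi> :: "real \<Rightarrow> 'a::euclidean_space"
  assumes ab: "a < b" and ac: "abs_cont_on_interval \<psi> a b" and N: "negligible N"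
    and S: "closed S" "convex S"
    and der: "\<forall>s\<in>{a<..<b} - N. \<exists>v. (\<psi> has_vector_derivative v) (at s) \<and> v \<in> S"
  shows "(\<psi> b - \<psi> a) /\<^sub>R (b - a) \<in> S"
proof (rule ccontr)
  define z where "z = (\<psi> b - \<psi> a) /\<^sub>R (b - a)"
  assume "\<not> ?thesis"
  then have "z \<notin> S" unfolding z_def .
  then obtain w c where wc: "inner w z < c" "\<forall>x\<in>S. inner w x > c"
    using separating_hyperplane_closed_point[OF S(2,1)] by blast
  define g where "g t = c * t - inner w (\<psi> t)" for t
  have "g b \<le> g a"
  proof (rule ac_mono[OF less_imp_le[OF ab] _ N])
    show "abs_cont_on_interval g a b" unfolding g_def using ac_lin[OF ac] .
    show "\<forall>s\<in>{a<..<b} - N. \<exists>d. (g has_real_derivative d) (at s) \<and> d \<le> 0"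
    proof
      fix s assume "s \<in> {a<..<b} - N"
      then obtain v where v: "(\<psi> has_vector_derivative v) (at s)" "v \<in> S" using der by blast
      have "(g has_real_derivative (c - inner w v)) (at s)"
        unfolding g_def by (rule inner_vd[OF v(1)])
      moreover have "c - inner w v \<le> 0" using wc(2) v(2) by force
      ultimately show "\<exists>d. (g has_real_derivative d) (at s) \<and> d \<le> 0" by blast
    qed
  qed
  then have "c * (b - a) \<le> inner w (\<psi> b - \<psi> a)"
    unfolding g_def by (simp add: inner_diff_right algebra_simps)
  moreover have "inner w (\<psi> b - \<psi> a) = (b - a) * inner w z"
    unfolding z_def using ab by (simp add: inner_scaleR_right)
  ultimately have "c * (b - a) \<le> (b - a) * inner w z" by simp
  then have "c \<le> inner w z" using ab by (simp add: mult.commute)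
  then show False using wc(1) by simp
qed

lemma oscD:
  assumes "osc_rel F C" "x \<in> C" "\<forall>i. xs i \<in> C" "\<forall>i. ys i \<in> F (xs i)" "xs \<longlonglongrightarrow> x" "ys \<longlonglongrightarrow> y"
  shows "y \<in> F x"
  using assms unfolding osc_rel_def by blast

lemma Fclosed:
  assumes "osc_rel F C" "x \<in> C"
  shows "closed (F x)"
  unfolding closed_sequential_limits
proof (intro allI impI)
  fix ys l assume h: "(\<forall>n. ys n \<in> F x) \<and> ys \<longlonglongrightarrow> l"
  show "l \<in> F x" using oscD[OF assms, of "\<lambda>_. x" ys l] h assms(2) by simp
qed

lemma locbdd_ball:
  assumes "locbdd_rel F C" "x \<in> C"
  shows "\<exists>r>0. \<exists>M>0. \<forall>z\<in>C. dist z x < r \<longrightarrow> (\<forall>v\<in>F z. norm v \<le> M)"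
proof -
  obtain U where U: "open U" "x \<in> U" "bounded (\<Union>z\<in>U \<inter> C. F z)"
    using assms unfolding locbdd_rel_def by blast
  obtain M where M: "M > 0" "\<forall>v\<in>(\<Union>z\<in>U \<inter> C. F z). norm v \<le> M"
    using U(3) bounded_pos by blast
  obtain r where r: "r > 0" "ball x r \<subseteq> U" using U(1,2) open_contains_ball by blast
  have "\<forall>z\<in>C. dist z x < r \<longrightarrow> (\<forall>v\<in>F z. norm v \<le> M)"
  proof (intro ballI impI)
    fix z v assume "z \<in> C" "dist z x < r" "v \<in> F z"
    then have "z \<in> U \<inter> C" using r(2) by (auto simp: dist_commute)
    then show "norm v \<le> M" using M(2) \<open>v \<in> F z\<close> by blast
  qed
  then show ?thesis using r(1) M(1) by blast
qed

lemma usc: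
  fixes F :: "'a::euclidean_space \<Rightarrow> 'a set"
  assumes osc: "osc_rel F C" and lb: "locbdd_rel F C" and xC: "x \<in> C" and e: "\<epsilon> > 0"
  shows "\<exists>\<delta>>0. \<forall>z\<in>C. dist z x < \<delta> \<longrightarrow> (\<forall>v\<in>F z. \<exists>u\<in>F x. dist v u \<le> \<epsilon>)"
proof (rule ccontr)
  assume neg: "\<not> ?thesis"
  obtain r M where rM: "r > 0" "M > 0" "\<forall>z\<in>C. dist z x < r \<longrightarrow> (\<forall>v\<in>F z. norm v \<le> M)"
    using locbdd_ball[OF lb xC] by blast
  have "\<forall>k::nat. \<exists>z v. z \<in> C \<and> dist z x < min r (1 / (real k + 1)) \<and> v \<in> F z \<and> (\<forall>u\<in>F x. dist v u > \<epsilon>)"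
  proof
    fix k :: nat
    have "min r (1 / (real k + 1)) > 0" using rM by simp
    then show "\<exists>z v. z \<in> C \<and> dist z x < min r (1 / (real k + 1)) \<and> v \<in> F z \<and> (\<forall>u\<in>F x. dist v u > \<epsilon>)"
      using neg by (meson not_le)
  qed
  then obtain zs vs where zv: "\<And>k. zs k \<in> C" "\<And>k. dist (zs k) x < min r (1 / (real k + 1))"
      "\<And>k. vs k \<in> F (zs k)" "\<And>k. \<forall>u\<in>F x. dist (vs k) u > \<epsilon>"
    by metis
  have vb: "vs k \<in> cball 0 M" for k using rM(3) zv(1,2,3)[of k] by auto
  have vb': "\<forall>k. vs k \<in> cball 0 M" using vb by blast
  obtain l \<sigma> where l: "l \<in> cball 0 M" "strict_mono \<sigma>" "(vs \<circ> \<sigma>) \<longlonglongrightarrow> l"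
    using seq_compactE[OF compact_imp_seq_compact[OF compact_cball] vb'] by blast
  have zlim: "zs \<longlonglongrightarrow> x"
  proof (rule metric_LIMSEQ_I)
    fix q :: real assume q: "q > 0"
    obtain n0 :: nat where n0: "inverse (real (Suc n0)) < q" using reals_Archimedean[OF q] by blast
    show "\<exists>no. \<forall>n\<ge>no. dist (zs n) x < q"
    proof (intro exI[of _ n0] allI impI)
      fix n assume "n \<ge> n0"
      then have "1 / (real n + 1) \<le> 1 / (real n0 + 1)" by (simp add: frac_le)
      also have "\<dots> < q" using n0 by (simp add: inverse_eq_divide add.commute)
      finally show "dist (zs n) x < q" using zv(2)[of n] by simp
    qed
  qed
  have "(zs \<circ> \<sigma>) \<longlonglongrightarrow> x" using LIMSEQ_subseq_LIMSEQ[OF zlim l(2)] .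
  then have "l \<in> F x"
    using oscD[OF osc xC, of "zs \<circ> \<sigma>" "vs \<circ> \<sigma>" l] zv(1,3) l(3) by simp
  then have "\<forall>k. dist ((vs \<circ> \<sigma>) k) l > \<epsilon>" using zv(4) by simp
  moreover have "\<forall>\<^sub>F k in sequentially. dist ((vs \<circ> \<sigma>) k) l < \<epsilon>"
    using l(3) e tendsto_iff by fastforce
  ultimately show False by (metis (mono_tags, lifting) eventually_sequentially less_asym order_refl)
qed

lemma stay:
  fixes \<psi> :: "real \<Rightarrow> 'a::euclidean_space" and F :: "'a \<Rightarrow> 'a set"
  assumes ac: "abs_cont_on_interval \<psi> (b - L) b" and inC: "\<forall>s\<in>{b-L<..<b}. \<psi> s \<in> C"
    and N: "negligible N" and der: "\<forall>s\<in>{b-L<..<b} - N. \<exists>v. (\<psi> has_vector_derivative v) (at s) \<and> v \<in> F (\<psi> s)"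
    and bd: "\<forall>z\<in>C. dist z x < r \<longrightarrow> (\<forall>v\<in>F z. norm v \<le> M)" and M: "M \<ge> 0"
    and h: "0 < h" "h \<le> L" and small: "dist (\<psi> b) x + M * h < r"
  shows "\<forall>s\<in>{b-h..b}. dist (\<psi> s) x \<le> dist (\<psi> b) x + M * (b - s)"
proof -
  have cont: "continuous_on {b-h..b} \<psi>" using ac_cont[OF ac_sub[OF ac]] h by simp
  have step: "norm (\<psi> b - \<psi> s) \<le> M * (b - s)"
    if s: "b - h \<le> s" "s < b" and inside: "\<forall>s'\<in>{s<..<b}. dist (\<psi> s') x < r" for s
  proof -
    have "(\<psi> b - \<psi> s) /\<^sub>R (b - s) \<in> cball 0 M"
    proof (rule mvt_incl[OF s(2) _ N])
      show "abs_cont_on_interval \<psi> s b" using ac_sub[OF ac] s h by simp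
      show "closed (cball (0::'a) M)" "convex (cball (0::'a) M)" by auto
      show "\<forall>s'\<in>{s<..<b} - N. \<exists>v. (\<psi> has_vector_derivative v) (at s') \<and> v \<in> cball 0 M"
      proof
        fix s' assume s': "s' \<in> {s<..<b} - N"
        then have s'2: "s' \<in> {b-L<..<b} - N" using s h by auto
        then obtain v where v: "(\<psi> has_vector_derivative v) (at s')" "v \<in> F (\<psi> s')" using der by blast
        have "\<psi> s' \<in> C" using inC s'2 by blast
        moreover have "dist (\<psi> s') x < r" using inside s' by blast
        ultimately have "norm v \<le> M" using bd v(2) by blast
        then show "\<exists>v. (\<psi> has_vector_derivative v) (at s') \<and> v \<in> cball 0 M" using v(1) by auto
      qed
    qed
    then have "norm (\<psi> b - \<psi> s) / (b - s) \<le> M" using s by (simp add: divide_inverse_commute)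
    then show ?thesis using s by (simp add: pos_divide_le_eq mult.commute)
  qed
  define A where "A = {s\<in>{b-h..b}. (\<lambda>_. r) s \<le> dist (\<psi> s) x}"
  have Aempty: "A = {}"
  proof (rule ccontr)
    assume Ane: "A \<noteq> {}"
    have clA: "closed A" unfolding A_def
      by (intro continuous_on_closed_Collect_le continuous_on_const continuous_on_dist cont) auto
    have bA: "bdd_above A" unfolding A_def by (auto intro: bdd_aboveI[of _ b])
    define s0 where "s0 = Sup A"
    have s0A: "s0 \<in> A" using closed_contains_Sup[OF Ane bA clA] s0_def by simp
    have mh: "M * h \<ge> 0" using M h by simp
    have "dist (\<psi> b) x < r" using small mh by linarith
    then have "s0 \<noteq> b" using s0A unfolding A_def by auto
    then have s0b: "b - h \<le> s0" "s0 < b" using s0A unfolding A_def by auto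
    have inside: "\<forall>s'\<in>{s0<..<b}. dist (\<psi> s') x < r"
    proof
      fix s' assume s': "s' \<in> {s0<..<b}"
      have "s' \<notin> A"
      proof
        assume "s' \<in> A"
        then have "s' \<le> s0" unfolding s0_def using cSup_upper[OF _ bA] by blast
        then show False using s' by simp
      qed
      then show "dist (\<psi> s') x < r" using s' s0b unfolding A_def by auto
    qed
    have "norm (\<psi> b - \<psi> s0) \<le> M * (b - s0)" using step[OF s0b inside] .
    also have "\<dots> \<le> M * h" using M s0b by (intro mult_left_mono) auto
    finally have "norm (\<psi> b - \<psi> s0) \<le> M * h" .
    moreover have "dist (\<psi> s0) x \<le> norm (\<psi> b - \<psi> s0) + dist (\<psi> b) x"
      using dist_triangle[of "\<psi> s0" x "\<psi> b"] by (simp add: dist_norm norm_minus_commute)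
    ultimately have "dist (\<psi> s0) x < r" using small by linarith
    then show False using s0A unfolding A_def by auto
  qed
  show ?thesis
  proof
    fix s assume s: "s \<in> {b-h..b}"
    show "dist (\<psi> s) x \<le> dist (\<psi> b) x + M * (b - s)"
    proof (cases "s = b")
      case True then show ?thesis by simp
    next
      case False
      have "\<forall>s'\<in>{s<..<b}. dist (\<psi> s') x < r"
      proof
        fix s' assume s': "s' \<in> {s<..<b}"
        then have "s' \<in> {b-h..b}" using s by auto
        then show "dist (\<psi> s') x < r" using Aempty unfolding A_def by fastforce
      qed
      then have "norm (\<psi> b - \<psi> s) \<le> M * (b - s)" using step s False by auto
      moreover have "dist (\<psi> s) x \<le> norm (\<psi> b - \<psi> s) + dist (\<psi> b) x"
        using dist_triangle[of "\<psi> s" x "\<psi> b"] by (simp add: dist_norm norm_minus_commute)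
      ultimately show ?thesis by linarith
    qed
  qed
qed

lemma LL:
  fixes C :: "'a::euclidean_space set" and F :: "'a \<Rightarrow> 'a set"
  assumes osc: "osc_rel F C" and lb: "locbdd_rel F C" and Fne: "\<forall>z\<in>C. F z \<noteq> {} \<and> convex (F z)"
    and xC: "x \<in> C" and tc: "uminus ` F x \<inter> tangent_cone C x = {}" and L: "L > 0"
  shows "\<exists>\<rho>>0. \<forall>\<psi> b N. abs_cont_on_interval \<psi> (b - L) b \<and> (\<forall>s\<in>{b-L<..<b}. \<psi> s \<in> C) \<and> negligible N \<and>
           (\<forall>s\<in>{b-L<..<b} - N. \<exists>v. (\<psi> has_vector_derivative v) (at s) \<and> v \<in> F (\<psi> s)) \<longrightarrow> \<rho> \<le> dist (\<psi> b) x"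
proof (rule ccontr)
  assume neg: "\<not> ?thesis"
  define arc where "arc \<psi> b N \<longleftrightarrow> abs_cont_on_interval \<psi> (b - L) b \<and> (\<forall>s\<in>{b-L<..<b}. \<psi> s \<in> C) \<and> negligible N \<and>
           (\<forall>s\<in>{b-L<..<b} - N. \<exists>v. (\<psi> has_vector_derivative v) (at s) \<and> v \<in> F (\<psi> s))" for \<psi> b N
  have neg2: "\<exists>\<psi> b N. arc \<psi> b N \<and> dist (\<psi> b) x < \<rho>" if "\<rho> > 0" for \<rho>
  proof -
    have "\<not> (\<forall>\<psi> b N. arc \<psi> b N \<longrightarrow> \<rho> \<le> dist (\<psi> b) x)" using neg that unfolding arc_def by blast
    then show ?thesis by (auto simp: not_le)
  qed
  obtain r0 M where rM: "r0 > 0" "M > 0" "\<forall>z\<in>C. dist z x < r0 \<longrightarrow> (\<forall>v\<in>F z. norm v \<le> M)"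
    using locbdd_ball[OF lb xC] by blast
  define \<eta> where "\<eta> = min (L/2) (min 1 (r0 / (2*(M+1))))"
  have \<eta>: "\<eta> > 0" "\<eta> \<le> L/2" "\<eta> \<le> 1" "(M+1)*\<eta> \<le> r0/2"
  proof -
    show "\<eta> > 0" unfolding \<eta>_def using L rM by simp
    show "\<eta> \<le> L/2" unfolding \<eta>_def by (rule min.cobounded1)
    show "\<eta> \<le> 1" unfolding \<eta>_def by (meson min.cobounded1 min.cobounded2 order_trans)
    have "\<eta> \<le> r0 / (2*(M+1))" unfolding \<eta>_def by simp
    then have "(M+1)*\<eta> \<le> (M+1) * (r0 / (2*(M+1)))" using rM by (intro mult_left_mono) auto
    also have "\<dots> = r0/2" using rM by (simp add: field_simps)
    finally show "(M+1)*\<eta> \<le> r0/2" .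
  qed
  define h where "h k = \<eta> / (real k + 1)" for k :: nat
  have hpos: "h k > 0" for k unfolding h_def using \<eta> by simp
  have hle: "h k \<le> \<eta>" for k unfolding h_def using \<eta>(1) by (simp add: divide_le_eq)
  define d where "d k = (h k)^2" for k
  have dpos: "d k > 0" for k unfolding d_def using hpos[of k] by simp
  have dle: "d k \<le> h k" for k
  proof -
    have "h k * h k \<le> h k * 1" using hpos[of k] hle[of k] \<eta>(3) by (intro mult_left_mono) auto
    then show ?thesis unfolding d_def by (simp add: power2_eq_square)
  qed
  have Mh: "d k + M * h k \<le> (M+1) * h k" for k using dle[of k] by (simp add: algebra_simps)
  have Mh2: "(M+1) * h k \<le> r0/2" for k
  proof -
    have "(M+1) * h k \<le> (M+1) * \<eta>" using hle[of k] rM(2) by (intro mult_left_mono) auto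
    then show ?thesis using \<eta>(4) by linarith
  qed
  have "\<forall>k. \<exists>\<psi> b N. arc \<psi> b N \<and> dist (\<psi> b) x < d k" using neg2 dpos by blast
  then obtain \<psi>s bs Ns where arcs: "\<And>k. arc (\<psi>s k) (bs k) (Ns k)" and close: "\<And>k. dist (\<psi>s k (bs k)) x < d k"
    by metis
  have stayk: "dist (\<psi>s k s) x \<le> d k + M * h k" if s: "s \<in> {bs k - h k..bs k}" for k s
  proof -
    have "h k \<le> L" using hle[of k] \<eta>(2) L by simp
    moreover have "dist (\<psi>s k (bs k)) x + M * h k < r0" using close[of k] Mh[of k] Mh2[of k] rM(1) by simp
    ultimately have "\<forall>s\<in>{bs k - h k..bs k}. dist (\<psi>s k s) x \<le> dist (\<psi>s k (bs k)) x + M * (bs k - s)"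
      using stay[of "\<psi>s k" "bs k" L C "Ns k" F x r0 M "h k"] arcs[of k] rM hpos[of k] unfolding arc_def by auto
    then have "dist (\<psi>s k s) x \<le> dist (\<psi>s k (bs k)) x + M * (bs k - s)" using s by blast
    also have "\<dots> \<le> d k + M * h k"
    proof -
      have "M * (bs k - s) \<le> M * h k" using s rM(2) by (intro mult_left_mono) auto
      then show ?thesis using close[of k] by linarith
    qed
    finally show ?thesis .
  qed
  define w where "w k = (\<psi>s k (bs k - h k) - x) /\<^sub>R h k" for k
  have inC: "\<psi>s k (bs k - h k) \<in> C" for k
  proof -
    have "h k < L" using hle[of k] \<eta>(2) L by simp
    then have "bs k - h k \<in> {bs k - L<..<bs k}" using hpos[of k] by simp
    then show ?thesis using arcs[of k] unfolding arc_def by blast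
  qed
  have wb: "w k \<in> cball 0 (M+1)" for k
  proof -
    have "dist (\<psi>s k (bs k - h k)) x \<le> d k + M * h k" using stayk[of "bs k - h k" k] hpos[of k] by simp
    also have "\<dots> \<le> (M+1) * h k" by (rule Mh)
    finally have "norm (\<psi>s k (bs k - h k) - x) / h k \<le> M + 1"
      using hpos[of k] by (simp add: dist_norm pos_divide_le_eq)
    then show ?thesis unfolding w_def using hpos[of k] by (simp add: divide_inverse_commute)
  qed
  have wb': "\<forall>k. w k \<in> cball 0 (M+1)" using wb by blast
  obtain w0 \<sigma> where w0: "w0 \<in> cball 0 (M+1)" "strict_mono \<sigma>" "(w \<circ> \<sigma>) \<longlonglongrightarrow> w0"
    using seq_compactE[OF compact_imp_seq_compact[OF compact_cball] wb'] by blast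
  have hlim: "h \<longlonglongrightarrow> 0"
  proof -
    have "(\<lambda>k. \<eta> * inverse (real (Suc k))) \<longlonglongrightarrow> 0"
      by (intro tendsto_mult_right_zero LIMSEQ_inverse_real_of_nat)
    moreover have "(\<lambda>k. \<eta> * inverse (real (Suc k))) = h"
      unfolding h_def by (auto simp: divide_inverse add.commute)
    ultimately show ?thesis by simp
  qed
  have h\<sigma>: "(h \<circ> \<sigma>) \<longlonglongrightarrow> 0" using LIMSEQ_subseq_LIMSEQ[OF hlim w0(2)] .
  have tan: "w0 \<in> tangent_cone C x"
    unfolding tangent_cone_def
  proof (intro CollectI exI[of _ "h \<circ> \<sigma>"] exI[of _ "w \<circ> \<sigma>"] conjI allI)
    fix i
    show "0 < (h \<circ> \<sigma>) i" using hpos by simp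
    have "x + h (\<sigma> i) *\<^sub>R w (\<sigma> i) = \<psi>s (\<sigma> i) (bs (\<sigma> i) - h (\<sigma> i))"
      unfolding w_def using hpos[of "\<sigma> i"] by simp
    then show "x + (h \<circ> \<sigma>) i *\<^sub>R (w \<circ> \<sigma>) i \<in> C" using inC by simp
  qed (use h\<sigma> w0 in auto)
  have "- w0 \<in> closure (F x)"
    unfolding closure_approachable
  proof (intro allI impI)
    fix e :: real assume e: "e > 0"
    define \<epsilon> where "\<epsilon> = e / 3"
    have ep: "\<epsilon> > 0" unfolding \<epsilon>_def using e by simp
    obtain \<delta> where \<delta>: "\<delta> > 0" "\<forall>z\<in>C. dist z x < \<delta> \<longrightarrow> (\<forall>v\<in>F z. \<exists>u\<in>F x. dist v u \<le> \<epsilon>)"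
      using usc[OF osc lb xC ep] by blast
    have pos: "min \<epsilon> (min \<delta> r0 / (M+1)) > 0" using ep \<delta>(1) rM by simp
    have ev1: "\<forall>\<^sub>F i in sequentially. (h \<circ> \<sigma>) i < min \<epsilon> (min \<delta> r0 / (M+1))"
      using order_tendstoD(2)[OF h\<sigma> pos] .
    have ev2: "\<forall>\<^sub>F i in sequentially. dist ((w \<circ> \<sigma>) i) w0 < \<epsilon>"
      using w0(3) ep tendsto_iff by fastforce
    obtain i where i: "(h \<circ> \<sigma>) i < min \<epsilon> (min \<delta> r0 / (M+1))" "dist ((w \<circ> \<sigma>) i) w0 < \<epsilon>"
      using eventually_happens'[OF _ eventually_conj[OF ev1 ev2]] by auto
    define k where "k = \<sigma> i"
    have hk: "h k < \<epsilon>" "(M+1) * h k < min \<delta> r0"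
      using i(1) rM(2) unfolding k_def by (auto simp: field_simps)
    have dk: "dist (w k) w0 < \<epsilon>" using i(2) unfolding k_def by simp
    define S where "S = (\<Union>u\<in>F x. \<Union>v\<in>cball (0::'a) \<epsilon>. {u + v})"
    have arck: "arc (\<psi>s k) (bs k) (Ns k)" by (rule arcs)
    have hL: "h k < L" using hle[of k] \<eta>(2) L by simp
    have avg: "(\<psi>s k (bs k) - \<psi>s k (bs k - h k)) /\<^sub>R (bs k - (bs k - h k)) \<in> S"
    proof (rule mvt_incl)
      show "bs k - h k < bs k" using hpos[of k] by simp
      show "abs_cont_on_interval (\<psi>s k) (bs k - h k) (bs k)"
        using ac_sub[of "\<psi>s k" "bs k - L" "bs k" "bs k - h k" "bs k"] arck hL unfolding arc_def by simp
      show "negligible (Ns k)" using arck unfolding arc_def by simp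
      show "closed S" unfolding S_def using closed_compact_sums[OF Fclosed[OF osc xC] compact_cball] .
      show "convex S" unfolding S_def using convex_sums[of "F x" "cball 0 \<epsilon>"] Fne xC by auto
      show "\<forall>s\<in>{bs k - h k<..<bs k} - Ns k. \<exists>v. (\<psi>s k has_vector_derivative v) (at s) \<and> v \<in> S"
      proof
        fix s assume s: "s \<in> {bs k - h k<..<bs k} - Ns k"
        then have s2: "s \<in> {bs k - L<..<bs k} - Ns k" using hL by auto
        then obtain v where v: "(\<psi>s k has_vector_derivative v) (at s)" "v \<in> F (\<psi>s k s)"
          using arck unfolding arc_def by blast
        have psC: "\<psi>s k s \<in> C" using arck s2 unfolding arc_def by blast
        have "dist (\<psi>s k s) x \<le> d k + M * h k" using stayk[of s k] s by simp
        also have "\<dots> \<le> (M+1) * h k" by (rule Mh)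
        also have "\<dots> < \<delta>" using hk(2) by simp
        finally obtain u where u: "u \<in> F x" "dist v u \<le> \<epsilon>" using \<delta>(2) psC v(2) by blast
        have "v = u + (v - u)" by simp
        moreover have "v - u \<in> cball 0 \<epsilon>" using u(2) by (simp add: dist_norm norm_minus_commute)
        ultimately have "v \<in> S" unfolding S_def using u(1) by blast
        then show "\<exists>v. (\<psi>s k has_vector_derivative v) (at s) \<and> v \<in> S" using v(1) by blast
      qed
    qed
    then obtain u v where uv: "u \<in> F x" "norm v \<le> \<epsilon>"
      "(\<psi>s k (bs k) - \<psi>s k (bs k - h k)) /\<^sub>R h k = u + v"
      unfolding S_def by auto
    have eqw: "- w k = (\<psi>s k (bs k) - \<psi>s k (bs k - h k)) /\<^sub>R h k - (\<psi>s k (bs k) - x) /\<^sub>R h k"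
      unfolding w_def by (simp add: algebra_simps)
    have n2: "norm ((\<psi>s k (bs k) - x) /\<^sub>R h k) < \<epsilon>"
    proof -
      have "norm ((\<psi>s k (bs k) - x) /\<^sub>R h k) = dist (\<psi>s k (bs k)) x / h k"
        using hpos[of k] by (simp add: dist_norm divide_inverse_commute)
      also have "\<dots> < d k / h k" using close[of k] hpos[of k] by (simp add: divide_strict_right_mono)
      also have "\<dots> = h k" unfolding d_def using hpos[of k] by (simp add: power2_eq_square)
      finally show ?thesis using hk(1) by simp
    qed
    define q where "q = (\<psi>s k (bs k) - x) /\<^sub>R h k"
    have e1: "- w k = (u + v) - q" using eqw uv(3) unfolding q_def by simp
    have "dist u (- w k) = norm (u - ((u + v) - q))" using e1 by (simp add: dist_norm)
    also have "\<dots> = norm (q - v)" by (simp add: algebra_simps)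
    also have "\<dots> \<le> norm q + norm v" by (rule norm_triangle_ineq4)
    finally have A: "dist u (- w k) \<le> norm q + norm v" .
    have B: "dist (- w k) (- w0) = dist (w k) w0" by (simp add: dist_norm norm_minus_commute)
    have "dist u (- w0) \<le> dist u (- w k) + dist (- w k) (- w0)" by (rule dist_triangle)
    then have "dist u (- w0) < \<epsilon> + \<epsilon> + \<epsilon>" using A B uv(2) n2 dk unfolding q_def by linarith
    then show "\<exists>y\<in>F x. dist y (- w0) < e" using uv(1) unfolding \<epsilon>_def by auto
  qed
  then have "- w0 \<in> F x" using Fclosed[OF osc xC] by (simp add: closure_closed)
  then have "w0 \<in> uminus ` F x" by (metis image_eqI minus_minus)
  then show False using tan tc by blast
qed

lemma img_compact:
  fixes G :: "'a::euclidean_space \<Rightarrow> 'a set"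
  assumes osc: "osc_rel G D" and lb: "locbdd_rel G D" and cD: "compact D'" and sub: "D' \<subseteq> D"
  shows "compact (img G D')"
  unfolding compact_eq_seq_compact_metric seq_compact_def
proof (intro allI impI)
  fix ys :: "nat \<Rightarrow> 'a" assume ys: "\<forall>n. ys n \<in> img G D'"
  then have "\<forall>n. \<exists>d. d \<in> D' \<and> ys n \<in> G d" unfolding img_def by blast
  then obtain ds where ds: "\<And>n. ds n \<in> D'" "\<And>n. ys n \<in> G (ds n)" by metis
  have ds': "\<forall>n. ds n \<in> D'" using ds by blast
  obtain d r1 where d: "d \<in> D'" "strict_mono r1" "(ds \<circ> r1) \<longlonglongrightarrow> d"
    using seq_compactE[OF compact_imp_seq_compact[OF cD] ds'] by blast
  have dD: "d \<in> D" using d(1) sub by blast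
  obtain U where U: "open U" "d \<in> U" "bounded (\<Union>z\<in>U \<inter> D. G z)"
    using lb dD unfolding locbdd_rel_def by blast
  obtain R where R: "R > 0" "\<forall>v\<in>(\<Union>z\<in>U \<inter> D. G z). norm v \<le> R"
    using U(3) bounded_pos by blast
  have "\<forall>\<^sub>F n in sequentially. (ds \<circ> r1) n \<in> U"
    using d(3) U(1,2) topological_tendstoD by blast
  then obtain n0 where n0: "\<And>n. n \<ge> n0 \<Longrightarrow> (ds \<circ> r1) n \<in> U" unfolding eventually_sequentially by blast
  define zs where "zs n = ys (r1 (n + n0))" for n
  have zb: "\<forall>n. zs n \<in> cball 0 R"
  proof
    fix n
    have "ds (r1 (n + n0)) \<in> U \<inter> D" using n0[of "n + n0"] ds(1) sub by auto
    then show "zs n \<in> cball 0 R" unfolding zs_def using R(2) ds(2) by fastforce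
  qed
  obtain y r2 where y: "y \<in> cball 0 R" "strict_mono r2" "(zs \<circ> r2) \<longlonglongrightarrow> y"
    using seq_compactE[OF compact_imp_seq_compact[OF compact_cball] zb] by blast
  define r where "r n = r1 (r2 n + n0)" for n
  have smr: "strict_mono r"
    unfolding r_def strict_mono_def using d(2) y(2) by (simp add: strict_mono_def)
  have sm2: "strict_mono (\<lambda>n. r2 n + n0)" using y(2) by (simp add: strict_mono_def)
  have "((ds \<circ> r1) \<circ> (\<lambda>n. r2 n + n0)) \<longlonglongrightarrow> d" using LIMSEQ_subseq_LIMSEQ[OF d(3) sm2] .
  then have dl: "(ds \<circ> r) \<longlonglongrightarrow> d" unfolding r_def by (simp add: o_def)
  have yl: "(ys \<circ> r) \<longlonglongrightarrow> y" using y(3) unfolding r_def zs_def by (simp add: o_def)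
  have "y \<in> G d"
    using oscD[OF osc dD, of "ds \<circ> r" "ys \<circ> r" y] ds sub dl yl by auto
  then have "y \<in> img G D'" unfolding img_def using d(1) by blast
  then show "\<exists>l\<in>img G D'. \<exists>r. strict_mono r \<and> (ys \<circ> r) \<longlonglongrightarrow> l" using smr yl by blast
qed

lemma sol_htd: "is_solution C F D G E \<phi> \<Longrightarrow> hybrid_time_domain E"
  unfolding is_solution_def by (elim conjE)

lemma sol_lac: "is_solution C F D G E \<phi> \<Longrightarrow> loc_abs_cont_on (\<lambda>t. \<phi> t j) {t. (t, j) \<in> E}"
  unfolding is_solution_def by (elim conjE) (erule allE)

lemma sol_flow: "is_solution C F D G E \<phi> \<Longrightarrow> interior {t. (t, j) \<in> E} \<noteq> {} \<Longrightarrow>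
        (\<forall>t\<in>interior {t. (t, j) \<in> E}. \<phi> t j \<in> C) \<and>
        (\<exists>N. negligible N \<and> (\<forall>t\<in>interior {t. (t, j) \<in> E} - N.
            \<exists>v. ((\<lambda>s. \<phi> s j) has_vector_derivative v) (at t) \<and> v \<in> F (\<phi> t j)))"
  unfolding is_solution_def by (elim conjE) (erule allE, erule mp)

lemma sol_jump: "is_solution C F D G E \<phi> \<Longrightarrow> (t, j) \<in> E \<Longrightarrow> (t, Suc j) \<in> E \<Longrightarrow>
    \<phi> t j \<in> D \<and> \<phi> t (Suc j) \<in> G (\<phi> t j)"
  unfolding is_solution_def by (elim conjE) (erule allE, erule allE, erule mp, rule conjI)

lemma core:
  fixes C D :: "'a::euclidean_space set" and F G :: "'a \<Rightarrow> 'a set" and P :: "'a \<Rightarrow> bool"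
  assumes hbc: "hybrid_basic_conditions C F D G"
    and GC: "img G D \<subseteq> C"
    and tc: "\<forall>x\<in>C \<inter> img G D. uminus ` F x \<inter> tangent_cone C x = {}"
    and K0: "compact K0" "K0 \<subseteq> img G D"
    and sel: "\<And>p y. P p \<Longrightarrow> y \<in> img G D \<Longrightarrow> dist p y \<le> 1 \<Longrightarrow> y \<in> K0"
    and e4: "\<epsilon>4 > 0"
  shows "\<exists>\<epsilon>3>0. \<forall>E \<phi> t j. is_solution C F D G E \<phi> \<and> (t, j) \<in> E \<and> j \<ge> 1 \<and>
               \<phi> t j \<in> msum (C \<inter> img G D) (Bset \<epsilon>3) \<and> P (\<phi> t j) \<longrightarrow>
               (\<exists>t'\<in>{t - \<epsilon>4..t}. (t', j) \<in> E \<and> \<phi> t' j \<in> C \<inter> img G D)"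
proof -
  have oscF: "osc_rel F C" and lbF: "locbdd_rel F C" and Fne: "\<forall>z\<in>C. F z \<noteq> {} \<and> convex (F z)"
    using hbc unfolding hybrid_basic_conditions_def by auto
  define arcp where "arcp \<psi> b N \<longleftrightarrow> abs_cont_on_interval \<psi> (b - \<epsilon>4) b \<and> (\<forall>s\<in>{b-\<epsilon>4<..<b}. \<psi> s \<in> C) \<and> negligible N \<and>
           (\<forall>s\<in>{b-\<epsilon>4<..<b} - N. \<exists>v. (\<psi> has_vector_derivative v) (at s) \<and> v \<in> F (\<psi> s))" for \<psi> b N
  have ex: "\<forall>x\<in>K0. \<exists>\<rho>. \<rho> > 0 \<and> (\<forall>\<psi> b N. arcp \<psi> b N \<longrightarrow> \<rho> \<le> dist (\<psi> b) x)"
  proof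
    fix x assume "x \<in> K0"
    then have xC: "x \<in> C" and xI: "x \<in> C \<inter> img G D" using K0(2) GC by auto
    have tcx: "uminus ` F x \<inter> tangent_cone C x = {}" using tc xI by blast
    show "\<exists>\<rho>. \<rho> > 0 \<and> (\<forall>\<psi> b N. arcp \<psi> b N \<longrightarrow> \<rho> \<le> dist (\<psi> b) x)"
      unfolding arcp_def using LL[OF oscF lbF Fne xC tcx e4] by simp
  qed
  obtain \<rho> where \<rho>0: "\<forall>x\<in>K0. \<rho> x > 0 \<and> (\<forall>\<psi> b N. arcp \<psi> b N \<longrightarrow> \<rho> x \<le> dist (\<psi> b) x)"
    using bchoice[OF ex] by blast
  have \<rho>: "\<And>x. x \<in> K0 \<Longrightarrow> \<rho> x > 0" "\<And>x \<psi> b N. x \<in> K0 \<Longrightarrow> arcp \<psi> b N \<Longrightarrow> \<rho> x \<le> dist (\<psi> b) x"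
    using \<rho>0 by blast+
  have cov: "K0 \<subseteq> \<Union>((\<lambda>x. ball x (\<rho> x)) ` K0)" using \<rho>(1) by force
  obtain e where e: "e > 0" "\<And>y. y \<in> K0 \<Longrightarrow> \<exists>B\<in>(\<lambda>x. ball x (\<rho> x)) ` K0. ball y e \<subseteq> B"
    using Heine_Borel_lemma[OF K0(1) cov] by blast
  define \<epsilon>3 where "\<epsilon>3 = min (e/2) 1"
  have e3: "\<epsilon>3 > 0" unfolding \<epsilon>3_def using e(1) by simp
  show ?thesis
  proof (intro exI[of _ \<epsilon>3] conjI allI impI)
    show "\<epsilon>3 > 0" by fact
    fix E \<phi> t j
    assume H: "is_solution C F D G E \<phi> \<and> (t, j) \<in> E \<and> j \<ge> 1 \<and>
               \<phi> t j \<in> msum (C \<inter> img G D) (Bset \<epsilon>3) \<and> P (\<phi> t j)"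
    then have sol: "is_solution C F D G E \<phi>" and tE: "(t, j) \<in> E" and j1: "j \<ge> 1"
      and pm: "\<phi> t j \<in> msum (C \<inter> img G D) (Bset \<epsilon>3)" and Pp: "P (\<phi> t j)" by auto
    obtain y1 y2 where y: "\<phi> t j = y1 + y2" "y1 \<in> C \<inter> img G D" "norm y2 \<le> \<epsilon>3"
      using pm unfolding msum_def Bset_def by blast
    have dpy: "dist (\<phi> t j) y1 \<le> \<epsilon>3" using y by (simp add: dist_norm)
    have "y1 \<in> K0" using sel[OF Pp] y(2) dpy unfolding \<epsilon>3_def by auto
    then obtain x where x: "x \<in> K0" "ball y1 e \<subseteq> ball x (\<rho> x)" using e(2) by blast
    have "dist y1 (\<phi> t j) < e" using dpy e(1) unfolding \<epsilon>3_def by (simp add: dist_commute)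
    then have "\<phi> t j \<in> ball x (\<rho> x)" using x(2) by auto
    then have near: "dist (\<phi> t j) x < \<rho> x" by (simp add: dist_commute)
    have htd: "hybrid_time_domain E" using sol_htd[OF sol] .
    have Epos: "E \<subseteq> {0..} \<times> UNIV" using htd unfolding hybrid_time_domain_def by blast
    have "\<forall>T J. (T, J) \<in> E \<longrightarrow>
        (\<exists>tt::nat \<Rightarrow> real. tt 0 = 0 \<and> (\<forall>j\<le>J. tt j \<le> tt (Suc j)) \<and>
           E \<inter> ({0..T} \<times> {..J}) = (\<Union>j\<le>J. {tt j..tt (Suc j)} \<times> {j}))"
      using htd unfolding hybrid_time_domain_def by (elim conjE)
    then obtain tt where tt: "tt 0 = 0" "\<forall>i\<le>j. tt i \<le> tt (Suc i)"
      "E \<inter> ({0..t} \<times> {..j}) = (\<Union>i\<le>j. {tt i..tt (Suc i)} \<times> {i})"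
      using tE by blast
    have t0: "t \<ge> 0" using Epos tE by auto
    have RE: "(\<Union>i\<le>j. {tt i..tt (Suc i)} \<times> {i}) \<subseteq> E" using tt(3) by blast
    have "(t, j) \<in> E \<inter> ({0..t} \<times> {..j})" using tE t0 by simp
    then have "(t, j) \<in> (\<Union>i\<le>j. {tt i..tt (Suc i)} \<times> {i})" using tt(3) by simp
    then have ttj: "tt j \<le> t" "t \<le> tt (Suc j)" by auto
    obtain j' where j': "j = Suc j'" using j1 by (cases j) auto
    have sliceE: "(s, i) \<in> E" if "i \<le> j" "tt i \<le> s" "s \<le> tt (Suc i)" for s i
    proof -
      have "(s, i) \<in> {tt i..tt (Suc i)} \<times> {i}" using that by simp
      then have "(s, i) \<in> (\<Union>i\<le>j. {tt i..tt (Suc i)} \<times> {i})" using that(1) by blast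
      then show ?thesis using RE by blast
    qed
    have "tt j' \<le> tt j" using tt(2) j' by simp
    then have jumpE1: "(tt j, j') \<in> E" using sliceE[of j' "tt j"] j' by simp
    have jumpE2: "(tt j, j) \<in> E" using sliceE[of j "tt j"] ttj by simp
    have "\<phi> (tt j) j' \<in> D \<and> \<phi> (tt j) (Suc j') \<in> G (\<phi> (tt j) j')"
      using sol_jump[OF sol jumpE1] jumpE2 j' by simp
    then have jumpI: "\<phi> (tt j) j \<in> C \<inter> img G D" using GC j' unfolding img_def by blast
    show "\<exists>t'\<in>{t - \<epsilon>4..t}. (t', j) \<in> E \<and> \<phi> t' j \<in> C \<inter> img G D"
    proof (cases "t - \<epsilon>4 \<le> tt j")
      case True
      then have "tt j \<in> {t - \<epsilon>4..t}" using ttj by simp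
      then show ?thesis using jumpE2 jumpI by blast
    next
      case False
      define Sj where "Sj = {s. (s, j) \<in> E}"
      have sub: "{tt j..t} \<subseteq> Sj"
      proof
        fix s assume "s \<in> {tt j..t}"
        then have "tt j \<le> s" "s \<le> tt (Suc j)" using ttj by auto
        then show "s \<in> Sj" unfolding Sj_def using sliceE[of j s] by simp
      qed
      have sub1: "{t - \<epsilon>4..t} \<subseteq> Sj" using sub False by auto
      have sub2: "{t - \<epsilon>4<..<t} \<subseteq> interior Sj"
      proof (rule interior_maximal)
        show "{t - \<epsilon>4<..<t} \<subseteq> Sj" using sub1 by auto
      qed simp
      have "t - \<epsilon>4 / 2 \<in> {t - \<epsilon>4<..<t}" using e4 by simp
      then have ine: "interior Sj \<noteq> {}" using sub2 by blast
      have flow: "(\<forall>s\<in>interior Sj. \<phi> s j \<in> C) \<and> (\<exists>N. negligible N \<and> (\<forall>s\<in>interior Sj - N.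
            \<exists>v. ((\<lambda>s. \<phi> s j) has_vector_derivative v) (at s) \<and> v \<in> F (\<phi> s j)))"
        using sol_flow[OF sol ine[unfolded Sj_def]] unfolding Sj_def .
      then obtain N where N: "negligible N" "\<forall>s\<in>interior Sj - N.
            \<exists>v. ((\<lambda>s. \<phi> s j) has_vector_derivative v) (at s) \<and> v \<in> F (\<phi> s j)" by blast
      have lac: "loc_abs_cont_on (\<lambda>s. \<phi> s j) Sj" using sol_lac[OF sol] unfolding Sj_def .
      have "t - \<epsilon>4 \<le> t" using e4 by simp
      then have ac: "abs_cont_on_interval (\<lambda>s. \<phi> s j) (t - \<epsilon>4) t"
        using lac sub1 unfolding loc_abs_cont_on_def by blast
      have "arcp (\<lambda>s. \<phi> s j) t N"
        unfolding arcp_def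
      proof (intro conjI)
        show "abs_cont_on_interval (\<lambda>s. \<phi> s j) (t - \<epsilon>4) t" by fact
        show "\<forall>s\<in>{t - \<epsilon>4<..<t}. \<phi> s j \<in> C" using flow sub2 by blast
        show "negligible N" by fact
        show "\<forall>s\<in>{t - \<epsilon>4<..<t} - N. \<exists>v. ((\<lambda>s. \<phi> s j) has_vector_derivative v) (at s) \<and> v \<in> F (\<phi> s j)"
          using N(2) sub2 by blast
      qed
      then have "\<rho> x \<le> dist ((\<lambda>s. \<phi> s j) t) x" by (rule \<rho>(2)[OF x(1)])
      then show ?thesis using near by simp
    qed
  qed
qed

theorem lemma2:
  fixes C D :: "'a::euclidean_space set" and F G :: "'a \<Rightarrow> 'a set" and Kbar :: real
  assumes hbc: "hybrid_basic_conditions C F D G"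
    and "img G D \<inter> D = {}"
    and "img G D \<subseteq> C"
    and "single_valued_on G D"
    and "proper_setmap_on G D"
    and "\<forall>x\<in>C \<inter> img G D. uminus ` F x \<inter> tangent_cone C x = {}"
  shows "(bounded D \<longrightarrow>
            (\<forall>\<epsilon>4>0. \<exists>\<epsilon>3>0. \<forall>E \<phi> t j. is_solution C F D G E \<phi> \<and> (t, j) \<in> E \<and> j \<ge> 1 \<and>
               \<phi> t j \<in> msum (C \<inter> img G D) (Bset \<epsilon>3) \<longrightarrow>
               (\<exists>t'\<in>{t - \<epsilon>4..t}. (t', j) \<in> E \<and> \<phi> t' j \<in> C \<inter> img G D)))
       \<and> (\<not> bounded D \<longrightarrow>
            (\<forall>\<epsilon>4>0. \<exists>\<epsilon>3>0. \<forall>E \<phi> t j. is_solution C F D G E \<phi> \<and> (t, j) \<in> E \<and> j \<ge> 1 \<and>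
               \<phi> t j \<in> msum (C \<inter> img G D) (Bset \<epsilon>3) \<and> \<phi> t j \<in> Bset Kbar \<longrightarrow>
               (\<exists>t'\<in>{t - \<epsilon>4..t}. (t', j) \<in> E \<and> \<phi> t' j \<in> C \<inter> img G D)))"
proof -
  have closedD: "closed D" and oscG: "osc_rel G D" and lbG: "locbdd_rel G D"
    using hbc unfolding hybrid_basic_conditions_def by auto
  have GC: "img G D \<subseteq> C" using assms(3) .
  have tc: "\<forall>x\<in>C \<inter> img G D. uminus ` F x \<inter> tangent_cone C x = {}" using assms(6) .
  have part1: "bounded D \<longrightarrow>
            (\<forall>\<epsilon>4>0. \<exists>\<epsilon>3>0. \<forall>E \<phi> t j. is_solution C F D G E \<phi> \<and> (t, j) \<in> E \<and> j \<ge> 1 \<and>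
               \<phi> t j \<in> msum (C \<inter> img G D) (Bset \<epsilon>3) \<longrightarrow>
               (\<exists>t'\<in>{t - \<epsilon>4..t}. (t', j) \<in> E \<and> \<phi> t' j \<in> C \<inter> img G D))"
  proof (intro impI allI)
    fix \<epsilon>4 :: real assume bD: "bounded D" and e4: "\<epsilon>4 > 0"
    have cD: "compact D" using bD closedD by (simp add: compact_eq_bounded_closed)
    have cK: "compact (img G D)" using img_compact[OF oscG lbG cD subset_refl] .
    have "\<exists>\<epsilon>3>0. \<forall>E \<phi> t j. is_solution C F D G E \<phi> \<and> (t, j) \<in> E \<and> j \<ge> 1 \<and>
               \<phi> t j \<in> msum (C \<inter> img G D) (Bset \<epsilon>3) \<and> (\<lambda>_. True) (\<phi> t j) \<longrightarrow>
               (\<exists>t'\<in>{t - \<epsilon>4..t}. (t', j) \<in> E \<and> \<phi> t' j \<in> C \<inter> img G D)"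
      by (rule core[OF hbc GC tc cK subset_refl _ e4]) simp
    then show "\<exists>\<epsilon>3>0. \<forall>E \<phi> t j. is_solution C F D G E \<phi> \<and> (t, j) \<in> E \<and> j \<ge> 1 \<and>
               \<phi> t j \<in> msum (C \<inter> img G D) (Bset \<epsilon>3) \<longrightarrow>
               (\<exists>t'\<in>{t - \<epsilon>4..t}. (t', j) \<in> E \<and> \<phi> t' j \<in> C \<inter> img G D)" by simp
  qed
  have part2: "\<not> bounded D \<longrightarrow>
            (\<forall>\<epsilon>4>0. \<exists>\<epsilon>3>0. \<forall>E \<phi> t j. is_solution C F D G E \<phi> \<and> (t, j) \<in> E \<and> j \<ge> 1 \<and>
               \<phi> t j \<in> msum (C \<inter> img G D) (Bset \<epsilon>3) \<and> \<phi> t j \<in> Bset Kbar \<longrightarrow>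
               (\<exists>t'\<in>{t - \<epsilon>4..t}. (t', j) \<in> E \<and> \<phi> t' j \<in> C \<inter> img G D))"
  proof (intro impI allI)
    fix \<epsilon>4 :: real assume e4: "\<epsilon>4 > 0"
    define D' where "D' = {x\<in>D. G x \<inter> cball 0 (Kbar + 1) \<noteq> {}}"
    have cD': "compact D'" unfolding D'_def using assms(5) unfolding proper_setmap_on_def
      by (simp add: compact_cball)
    have sD': "D' \<subseteq> D" unfolding D'_def by blast
    have cK: "compact (img G D')" using img_compact[OF oscG lbG cD' sD'] .
    have sK: "img G D' \<subseteq> img G D" using sD' unfolding img_def by blast
    have sel: "y \<in> img G D'" if hh: "(\<lambda>p. p \<in> Bset Kbar) p" "y \<in> img G D" "dist p y \<le> 1" for p y
    proof -
      obtain d where d: "d \<in> D" "y \<in> G d" using hh(2) unfolding img_def by blast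
      have "norm p \<le> Kbar" using hh(1) unfolding Bset_def by simp
      moreover have "norm y \<le> norm p + dist p y"
        using norm_triangle_ineq2[of y p] by (simp add: dist_norm norm_minus_commute)
      ultimately have "norm y \<le> Kbar + 1" using hh(3) by linarith
      then have "d \<in> D'" unfolding D'_def using d by auto
      then show ?thesis unfolding img_def using d(2) by blast
    qed
    show "\<exists>\<epsilon>3>0. \<forall>E \<phi> t j. is_solution C F D G E \<phi> \<and> (t, j) \<in> E \<and> j \<ge> 1 \<and>
               \<phi> t j \<in> msum (C \<inter> img G D) (Bset \<epsilon>3) \<and> \<phi> t j \<in> Bset Kbar \<longrightarrow>
               (\<exists>t'\<in>{t - \<epsilon>4..t}. (t', j) \<in> E \<and> \<phi> t' j \<in> C \<inter> img G D)"
      using core[OF hbc GC tc cK sK sel e4] by simp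
  qed
  show ?thesis using part1 part2 by blast
qed

end
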